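(* Fix a full realization $\mathbf{y}_{\mathcal{W}}$ of the profiles. The allocation policy of \textsc{SeqTGreedy} (defined in the context) is monotone: for every user $i$ and every fixed bids $b_{-i}$ of the other users, if $b'_i\le b_i$ and $i$ is selected when the bids are $(b_i,b_{-i})$, then $i$ is also selected when the bids are $(b'_i,b_{-i})$.
   Context: Setting. $\mathcal{V}$ is a finite set and $f:2^{\mathcal{V}}\to\mathbb{R}_{\ge0}$ is monotone and submodular. $\mathcal{W}$ is a finite set of users and $\mathcal{O}\subseteq 2^{\mathcal{V}}$. Each user $w$ has a random sensing profile $Y_w$ with values in $\mathcal{O}$; the $Y_w$ are independent with known distributions. For $\mathcal{S}\subseteq\mathcal{W}$ and values $y_s$, write $\mathbf{y}_{\mathcal{S}}=\{(s,y_s):s\in\mathcal{S}\}$ and $g(\mathbf{y}_{\mathcal{S}})=f(\bigcup_{s\in\mathcal{S}}y_s)$. The conditional expected marginal gain is $\Delta_g(w\mid\mathbf{y}_{\mathcal{S}})=\sum_{y\in\mathcal{O}}P(Y_w=y\mid\mathbf{y}_{\mathcal{S}})\,[g(\mathbf{y}_{\mathcal{S}}\cup\{(w,y)\})-g(\mathbf{y}_{\mathcal{S}})]$. Users report bids $b_w\ge 0$; budget $\mathcal{B}>0$, parameter $\alpha\ge1$. Allocation policy of \textsc{SeqTGreedy}. Set $\mathcal{S}=\emptyset$, $\mathbf{y}_{\mathcal{S}}=\emptyset$, $\mathcal{W}'=\mathcal{W}$. While $\mathcal{W}'\ne\emptyset$: let $w^*\in\arg\max_{w\in\mathcal{W}'}\Delta_g(w\mid\mathbf{y}_{\mathcal{S}})/b_w$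 and $\Delta_{w^*}=\Delta_g(w^*\mid\mathbf{y}_{\mathcal{S}})$. If $\sum_{s\in\mathcal{S}}b_s+b_{w^*}\le\mathcal{B}$: if moreover $b_{w^*}\le\frac{\mathcal{B}}{\alpha}\cdot\frac{\Delta_{w^*}}{\sum_{s\in\mathcal{S}}\Delta_s+\Delta_{w^*}}$ then add $w^*$ to $\mathcal{S}$ (recording $\Delta_{w^*}$), observe $y_{w^*}$ (its value in the fixed realization $\mathbf{y}_{\mathcal{W}}$), add $(w^*,y_{w^*})$ to $\mathbf{y}_{\mathcal{S}}$, remove $w^*$ from $\mathcal{W}'$; otherwise stop. If the budget test fails, remove $w^*$ from $\mathcal{W}'$. *)

theory Defs
  imports "HOL-Probability.Probability"
begin

definition monotone_on_sets :: "'v set \<Rightarrow> ('v set \<Rightarrow> real) \<Rightarrow> bool" where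
  "monotone_on_sets V f \<longleftrightarrow> (\<forall>A B. A \<subseteq> B \<and> B \<subseteq> V \<longrightarrow> f A \<le> f B)"

definition submodular_on_sets :: "'v set \<Rightarrow> ('v set \<Rightarrow> real) \<Rightarrow> bool" where
  "submodular_on_sets V f \<longleftrightarrow>
     (\<forall>A B x. A \<subseteq> B \<and> B \<subseteq> V \<and> x \<in> V - B \<longrightarrow>
        f (insert x B) - f B \<le> f (insert x A) - f A)"

text \<open>Joint law of the independent profiles (Y_w)_{w in W}; outside W the value is {}.\<close>
definition joint :: "'w set \<Rightarrow> ('w \<Rightarrow> 'v set pmf) \<Rightarrow> ('w \<Rightarrow> 'v set) pmf" where
  "joint W p = Pi_pmf W {} p"

text \<open>P(Y_w = y | y_S), where y_S is given by the fixed realization yW restricted to S.\<close>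
definition cond_prob ::
  "'w set \<Rightarrow> ('w \<Rightarrow> 'v set pmf) \<Rightarrow> ('w \<Rightarrow> 'v set) \<Rightarrow> 'w set \<Rightarrow> 'w \<Rightarrow> 'v set \<Rightarrow> real" where
  "cond_prob W p yW S w y =
     measure_pmf.prob (joint W p) {\<omega>. \<omega> w = y \<and> (\<forall>s\<in>S. \<omega> s = yW s)}
     / measure_pmf.prob (joint W p) {\<omega>. \<forall>s\<in>S. \<omega> s = yW s}"

definition gval :: "('v set \<Rightarrow> real) \<Rightarrow> ('w \<Rightarrow> 'v set) \<Rightarrow> 'w set \<Rightarrow> real" where
  "gval f yW S = f (\<Union>s\<in>S. yW s)"

definition exp_gain ::
  "('v set \<Rightarrow> real) \<Rightarrow> 'v set set \<Rightarrow> 'w set \<Rightarrow> ('w \<Rightarrow> 'v set pmf) \<Rightarrow> ('w \<Rightarrow> 'v set)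
   \<Rightarrow> 'w set \<Rightarrow> 'w \<Rightarrow> real" where
  "exp_gain f Ob W p yW S w =
     (\<Sum>y\<in>Ob. cond_prob W p yW S w y * (f ((\<Union>s\<in>S. yW s) \<union> y) - gval f yW S))"

definition ratio :: "real \<Rightarrow> real \<Rightarrow> ereal" where
  "ratio d c = (if c = 0 then \<infinity> else ereal (d / c))"

text \<open>State: (selected users with recorded gains, in selection order; remaining W'; stopped).\<close>
type_synonym 'w st = "('w \<times> real) list \<times> 'w set \<times> bool"

definition pick_user ::
  "('v set \<Rightarrow> real) \<Rightarrow> 'v set set \<Rightarrow> 'w::linorder set \<Rightarrow> ('w \<Rightarrow> 'v set pmf) \<Rightarrow> ('w \<Rightarrow> 'v set)
   \<Rightarrow> ('w \<Rightarrow> real) \<Rightarrow> 'w set \<Rightarrow> 'w set \<Rightarrow> 'w" where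
  "pick_user f Ob W p yW b S W' =
     (LEAST w. w \<in> W' \<and>
        (\<forall>u\<in>W'. ratio (exp_gain f Ob W p yW S u) (b u) \<le> ratio (exp_gain f Ob W p yW S w) (b w)))"

definition step ::
  "('v set \<Rightarrow> real) \<Rightarrow> 'v set set \<Rightarrow> 'w::linorder set \<Rightarrow> ('w \<Rightarrow> 'v set pmf) \<Rightarrow> ('w \<Rightarrow> 'v set)
   \<Rightarrow> ('w \<Rightarrow> real) \<Rightarrow> real \<Rightarrow> real \<Rightarrow> 'w st \<Rightarrow> 'w st" where
  "step f Ob W p yW b B \<alpha> st =
    (case st of (sel, W', stopped) \<Rightarrow>
      if stopped \<or> W' = {} then st
      else
        let S = fst ` set sel;
            w = pick_user f Ob W p yW b S W';
            d = exp_gain f Ob W p yW S w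
        in if (\<Sum>s\<in>S. b s) + b w \<le> B then
             (if b w \<le> B / \<alpha> * (d / (sum_list (map snd sel) + d))
              then (sel @ [(w, d)], W' - {w}, False)
              else (sel, W', True))
           else (sel, W' - {w}, False))"

text \<open>Each non-stopping step removes a user from W', so card W steps reach the final state.\<close>
definition selected ::
  "('v set \<Rightarrow> real) \<Rightarrow> 'v set set \<Rightarrow> 'w::linorder set \<Rightarrow> ('w \<Rightarrow> 'v set pmf) \<Rightarrow> ('w \<Rightarrow> 'v set)
   \<Rightarrow> ('w \<Rightarrow> real) \<Rightarrow> real \<Rightarrow> real \<Rightarrow> 'w set" where
  "selected f Ob W p yW b B \<alpha> =
     fst ` set (fst ((step f Ob W p yW b B \<alpha> ^^ card W) ([], W, False)))"

end

theory Submission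
  imports Defs
begin


locale SG =
  fixes V :: "'v set" and f :: "'v set \<Rightarrow> real" and Ob :: "'v set set"
    and W :: "'w::linorder set" and p :: "'w \<Rightarrow> 'v set pmf" and yW :: "'w \<Rightarrow> 'v set"
  assumes finV: "finite V" and monof: "monotone_on_sets V f" and subm: "submodular_on_sets V f"
    and finW: "finite W" and ObV: "Ob \<subseteq> Pow V" and yWOb: "\<forall>w\<in>W. yW w \<in> Ob"
begin

lemma smod: "A \<subseteq> B \<Longrightarrow> B \<subseteq> V \<Longrightarrow> x \<in> V - B \<Longrightarrow> f (insert x B) - f B \<le> f (insert x A) - f A"
  using subm unfolding submodular_on_sets_def by (elim allE[of _ A] allE[of _ B] allE[of _ x]) simp

lemma fmono: "A \<subseteq> B \<Longrightarrow> B \<subseteq> V \<Longrightarrow> f A \<le> f B"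
  using monof unfolding monotone_on_sets_def by (elim allE[of _ A] allE[of _ B]) simp

lemma set_submod:
  assumes "U \<subseteq> U'" "U' \<subseteq> V" "Y \<subseteq> V"
  shows "f (U' \<union> Y) - f U' \<le> f (U \<union> Y) - f U"
proof -
  have "finite Y" using assms(3) finV finite_subset by blast
  then show ?thesis using assms(3)
  proof (induction Y rule: finite_induct)
    case empty then show ?case by simp
  next
    case (insert x Y)
    have IH: "f (U' \<union> Y) - f U' \<le> f (U \<union> Y) - f U" using insert by simp
    have xV: "x \<in> V" using insert by simp
    have step: "f (insert x (U' \<union> Y)) - f (U' \<union> Y) \<le> f (insert x (U \<union> Y)) - f (U \<union> Y)"
    proof (cases "x \<in> U' \<union> Y")
      case True
      then have "insert x (U' \<union> Y) = U' \<union> Y" by blast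
      moreover have "insert x (U \<union> Y) \<subseteq> V" using xV assms insert.prems by auto
      then have "f (U \<union> Y) \<le> f (insert x (U \<union> Y))"
        by (rule fmono[rotated]) blast
      ultimately show ?thesis by simp
    next
      case False
      have "U \<union> Y \<subseteq> U' \<union> Y" "U' \<union> Y \<subseteq> V" "x \<in> V - (U' \<union> Y)"
        using False xV assms insert.prems by auto
      then show ?thesis by (rule smod)
    qed
    have e1: "U' \<union> insert x Y = insert x (U' \<union> Y)" "U \<union> insert x Y = insert x (U \<union> Y)" by auto
    show ?case unfolding e1 using IH step by linarith
  qed
qed

lemma cond_prob_nonneg: "0 \<le> cond_prob W p yW S w y"
  unfolding cond_prob_def by simp

lemma US_sub: "S \<subseteq> W \<Longrightarrow> (\<Union>s\<in>S. yW s) \<subseteq> V"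
  using yWOb ObV by blast

lemma gain_nonneg: assumes "S \<subseteq> W" shows "0 \<le> exp_gain f Ob W p yW S u"
  unfolding exp_gain_def gval_def
proof (rule sum_nonneg)
  fix y assume "y \<in> Ob"
  then have "y \<subseteq> V" using ObV by blast
  then have "f (\<Union>s\<in>S. yW s) \<le> f ((\<Union>s\<in>S. yW s) \<union> y)"
    using US_sub[OF assms] by (intro fmono) auto
  then show "0 \<le> cond_prob W p yW S u y * (f ((\<Union>s\<in>S. yW s) \<union> y) - f (\<Union>s\<in>S. yW s))"
    using cond_prob_nonneg by simp
qed

lemma indep:
  assumes "i \<in> W" "i \<notin> S" "S \<subseteq> W"
  shows "measure_pmf.prob (joint W p) {\<omega>. \<omega> i = y \<and> (\<forall>s\<in>S. \<omega> s = yW s)}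
       = pmf (p i) y * measure_pmf.prob (joint W p) {\<omega>. \<forall>s\<in>S. \<omega> s = yW s}"
proof -
  define B1 where "B1 = (\<lambda>x. if x = i then {y} else if x \<in> S then {yW x} else UNIV)"
  define B0 where "B0 = (\<lambda>x. if x \<in> S then {yW x} else UNIV)"
  have e1: "{\<omega>. \<omega> i = y \<and> (\<forall>s\<in>S. \<omega> s = yW s)} = Pi W B1"
    using assms unfolding B1_def Pi_def by auto
  have e0: "{\<omega>. \<forall>s\<in>S. \<omega> s = yW s} = Pi W B0"
    using assms unfolding B0_def Pi_def by auto
  have "measure_pmf.prob (joint W p) (Pi W B1) = (\<Prod>x\<in>W. measure_pmf.prob (p x) (B1 x))"
    unfolding joint_def by (rule measure_Pi_pmf_Pi[OF finW])
  also have "\<dots> = measure_pmf.prob (p i) (B1 i) * (\<Prod>x\<in>W-{i}. measure_pmf.prob (p x) (B1 x))"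
    using assms finW by (simp add: prod.remove)
  also have "(\<Prod>x\<in>W-{i}. measure_pmf.prob (p x) (B1 x)) = (\<Prod>x\<in>W-{i}. measure_pmf.prob (p x) (B0 x))"
    by (rule prod.cong) (auto simp: B1_def B0_def)
  also have "measure_pmf.prob (p i) (B1 i) = pmf (p i) y" by (simp add: B1_def measure_pmf_single)
  also have "(\<Prod>x\<in>W-{i}. measure_pmf.prob (p x) (B0 x)) = (\<Prod>x\<in>W. measure_pmf.prob (p x) (B0 x))"
    using assms finW by (simp add: prod.remove B0_def)
  also have "\<dots> = measure_pmf.prob (joint W p) (Pi W B0)"
    unfolding joint_def by (rule measure_Pi_pmf_Pi[OF finW, symmetric])
  finally show ?thesis using e1 e0 by simp
qed

lemma cond_prob_eq:
  assumes "i \<in> W" "i \<notin> S" "S \<subseteq> W"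
  shows "cond_prob W p yW S i y =
    (if measure_pmf.prob (joint W p) {\<omega>. \<forall>s\<in>S. \<omega> s = yW s} = 0 then 0 else pmf (p i) y)"
  unfolding cond_prob_def indep[OF assms] by simp

lemma gain_anti:
  assumes "S \<subseteq> T" "T \<subseteq> W" "i \<in> W" "i \<notin> T"
  shows "exp_gain f Ob W p yW T i \<le> exp_gain f Ob W p yW S i"
  unfolding exp_gain_def gval_def
proof (rule sum_mono)
  fix y assume "y \<in> Ob"
  then have yV: "y \<subseteq> V" using ObV by blast
  have SW: "S \<subseteq> W" "i \<notin> S" using assms by auto
  let ?PT = "measure_pmf.prob (joint W p) {\<omega>. \<forall>s\<in>T. \<omega> s = yW s}"
  let ?PS = "measure_pmf.prob (joint W p) {\<omega>. \<forall>s\<in>S. \<omega> s = yW s}"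
  have monoS: "0 \<le> f ((\<Union>s\<in>S. yW s) \<union> y) - f (\<Union>s\<in>S. yW s)"
    using US_sub[OF SW(1)] yV fmono[of "\<Union>s\<in>S. yW s" "(\<Union>s\<in>S. yW s) \<union> y"] by auto
  show "cond_prob W p yW T i y * (f ((\<Union>s\<in>T. yW s) \<union> y) - f (\<Union>s\<in>T. yW s))
     \<le> cond_prob W p yW S i y * (f ((\<Union>s\<in>S. yW s) \<union> y) - f (\<Union>s\<in>S. yW s))"
  proof (cases "?PT = 0")
    case True
    then have "cond_prob W p yW T i y = 0" using cond_prob_eq[OF assms(3,4,2)] by simp
    then show ?thesis using cond_prob_nonneg monoS by simp
  next
    case False
    have "?PT \<le> ?PS" using assms(1) by (intro measure_pmf.finite_measure_mono) auto
    moreover have "0 \<le> ?PT" by simp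
    ultimately have "?PS \<noteq> 0" using False by linarith
    then have c: "cond_prob W p yW T i y = pmf (p i) y" "cond_prob W p yW S i y = pmf (p i) y"
      using cond_prob_eq[OF assms(3,4,2), of y] cond_prob_eq[OF assms(3) SW(2,1), of y] False by simp_all
    have "(\<Union>s\<in>S. yW s) \<subseteq> (\<Union>s\<in>T. yW s)" using assms(1) by blast
    then have "f ((\<Union>s\<in>T. yW s) \<union> y) - f (\<Union>s\<in>T. yW s) \<le> f ((\<Union>s\<in>S. yW s) \<union> y) - f (\<Union>s\<in>S. yW s)"
      by (rule set_submod[OF _ US_sub[OF assms(2)] yV])
    then show ?thesis unfolding c by (simp add: mult_left_mono)
  qed
qed

end

definition pk :: "('w \<Rightarrow> ereal) \<Rightarrow> 'w::linorder set \<Rightarrow> 'w" where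
  "pk r X = (LEAST w. w \<in> X \<and> (\<forall>u\<in>X. r u \<le> r w))"

lemma pk_ex: fixes r :: "'w::linorder \<Rightarrow> ereal" assumes "finite X" "X \<noteq> {}" shows "\<exists>w. w \<in> X \<and> (\<forall>u\<in>X. r u \<le> r w)"
proof -
  have "Max (r ` X) \<in> r ` X" using assms by simp
  then obtain w where "w \<in> X" "r w = Max (r ` X)" by auto
  then show ?thesis using assms by auto
qed

lemma pk_props:
  assumes "finite X" "X \<noteq> {}"
  shows "pk r X \<in> X" "\<forall>u\<in>X. r u \<le> r (pk r X)"
    "\<And>w. w \<in> X \<Longrightarrow> \<forall>u\<in>X. r u \<le> r w \<Longrightarrow> pk r X \<le> w"
proof -
  define M where "M = {w. w \<in> X \<and> (\<forall>u\<in>X. r u \<le> r w)}"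
  have fM: "finite M" using assms(1) unfolding M_def by simp
  have neM: "M \<noteq> {}" using pk_ex[OF assms] unfolding M_def by blast
  have mM: "Min M \<in> M" using fM neM by simp
  have eq: "pk r X = Min M"
    unfolding pk_def
  proof (rule Least_equality)
    show "Min M \<in> X \<and> (\<forall>u\<in>X. r u \<le> r (Min M))" using mM unfolding M_def by simp
    show "\<And>y. y \<in> X \<and> (\<forall>u\<in>X. r u \<le> r y) \<Longrightarrow> Min M \<le> y"
      using fM unfolding M_def by simp
  qed
  show "pk r X \<in> X" "\<forall>u\<in>X. r u \<le> r (pk r X)" using mM eq unfolding M_def by auto
  show "\<And>w. w \<in> X \<Longrightarrow> \<forall>u\<in>X. r u \<le> r w \<Longrightarrow> pk r X \<le> w"
    using fM eq unfolding M_def by simp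
qed

lemma pk_cmp1:
  assumes "finite X" "X \<noteq> {}" "\<forall>u\<in>X. u \<noteq> i \<longrightarrow> r' u = r u" "r i \<le> r' i"
    and "pk r' X \<noteq> i"
  shows "pk r' X = pk r X"
proof -
  define w' where "w' = pk r' X"
  define w where "w = pk r X"
  note P = pk_props[OF assms(1,2), where r=r'] and Q = pk_props[OF assms(1,2), where r=r]
  have w'X: "w' \<in> X" and wX: "w \<in> X" using P Q w'_def w_def by auto
  have rr: "\<forall>u\<in>X. r u \<le> r' u" using assms(3,4) by (metis order.refl)
  have eq': "r' w' = r w'" using assms(3,5) w'X w'_def by auto
  have "\<forall>u\<in>X. r u \<le> r w'" using rr P(2) eq' w'_def by (metis order.trans)
  then have le1: "w \<le> w'" using Q(3)[OF w'X] w_def by simp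
  have maxw: "\<forall>u\<in>X. r u \<le> r w" using Q w_def by simp
  have "w' \<le> w"
  proof (cases "w = i")
    case False
    then have "r' w = r w" using assms(3) wX by auto
    moreover have "r' w' \<le> r w" using eq' maxw w'X by simp
    ultimately have "\<forall>u\<in>X. r' u \<le> r' w" using P(2) w'_def by (metis order.trans)
    then show ?thesis using P(3)[OF wX] w'_def by simp
  next
    case True
    have "r' i \<le> r' w'" using P(2) w'_def wX True by simp
    have "\<forall>u\<in>X. r' u \<le> r' i"
      using P(2) w'_def eq' maxw w'X True assms(4) by (metis order.trans)
    then show ?thesis using P(3)[OF wX] w'_def True by simp
  qed
  then show ?thesis using le1 w_def w'_def by simp
qed

lemma pk_cmp2:
  assumes "finite X" "X \<noteq> {}" "\<forall>u\<in>X. u \<noteq> i \<longrightarrow> r' u = r u" "r i \<le> r' i"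
    and "pk r X = i"
  shows "pk r' X = i"
proof (rule ccontr)
  assume "pk r' X \<noteq> i"
  then have "pk r' X = pk r X" using pk_cmp1[OF assms(1-4)] by blast
  then show False using assms(5) \<open>pk r' X \<noteq> i\<close> by simp
qed

lemma ratio_mono: assumes "0 \<le> d" "0 \<le> c'" "c' \<le> c" shows "ratio d c \<le> ratio d c'"
proof (cases "c' = 0")
  case True then show ?thesis by (simp add: ratio_def)
next
  case False
  then have "0 < c'" "0 < c" using assms by auto
  then have "d / c \<le> d / c'" using assms by (simp add: divide_left_mono)
  then show ?thesis using \<open>0 < c'\<close> \<open>0 < c\<close> by (simp add: ratio_def)
qed

lemma arith_key:
  fixes c dk dm Dk Dm b b' :: real
  assumes "0 < c" "0 \<le> dk" "dk \<le> dm" "0 \<le> Dm" "Dm \<le> Dk" "0 \<le> b'" "b' \<le> b"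
    "b \<le> c * (dk / (Dk + dk))"
  shows "b' \<le> c * (dm / (Dm + dm))"
proof (cases "dk = 0")
  case True
  then have "b \<le> 0" using assms by simp
  moreover have "0 \<le> c * (dm / (Dm + dm))" using assms by simp
  ultimately show ?thesis using assms by linarith
next
  case False
  then have dk: "0 < dk" using assms by simp
  have "dk * Dm \<le> dm * Dk" using assms dk by (meson mult_mono order.trans order_less_imp_le)
  then have "dk / (Dk + dk) \<le> dm / (Dm + dm)" using dk assms by (simp add: divide_simps) (simp add: algebra_simps)
  then have "c * (dk / (Dk + dk)) \<le> c * (dm / (Dm + dm))" using assms(1) by (intro mult_left_mono) auto
  then show ?thesis using assms by linarith
qed


lemma pick_pk: "pick_user f Ob W p yW b S W' = pk (\<lambda>u. ratio (exp_gain f Ob W p yW S u) (b u)) W'"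
  unfolding pick_user_def pk_def by simp

lemma step_stopped: "step f Ob W p yW b B \<alpha> (sel, W', True) = (sel, W', True)"
  unfolding step_def by simp

lemma step_prefix: "\<exists>zs. fst (step f Ob W p yW b B \<alpha> s) = fst s @ zs"
proof -
  obtain sel W' st where s: "s = (sel, W', st)" by (cases s)
  show ?thesis unfolding s step_def by (auto simp: Let_def)
qed

lemma step_W': "fst (snd (step f Ob W p yW b B \<alpha> s)) \<subseteq> fst (snd s)"
proof -
  obtain sel W' st where s: "s = (sel, W', st)" by (cases s)
  show ?thesis unfolding s step_def by (auto simp: Let_def)
qed

lemma step_sel_i:
  assumes "i \<notin> fst ` set sel" "i \<in> fst ` set (fst (step f Ob W p yW b B \<alpha> (sel, W', st)))"
  shows "\<not> st \<and> W' \<noteq> {} \<and> pick_user f Ob W p yW b (fst ` set sel) W' = i \<and>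
     (\<Sum>s\<in>fst ` set sel. b s) + b i \<le> B \<and>
     b i \<le> B / \<alpha> * (exp_gain f Ob W p yW (fst ` set sel) i /
        (sum_list (map snd sel) + exp_gain f Ob W p yW (fst ` set sel) i))"
  using assms unfolding step_def by (auto simp: Let_def split: if_splits)

lemma step_sel_new:
  assumes "\<not> st" "W' \<noteq> {}" "pick_user f Ob W p yW b (fst ` set sel) W' = i"
    "(\<Sum>s\<in>fst ` set sel. b s) + b i \<le> B"
    "b i \<le> B / \<alpha> * (exp_gain f Ob W p yW (fst ` set sel) i /
        (sum_list (map snd sel) + exp_gain f Ob W p yW (fst ` set sel) i))"
  shows "i \<in> fst ` set (fst (step f Ob W p yW b B \<alpha> (sel, W', st)))"
  using assms unfolding step_def by (auto simp: Let_def)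

lemma step_same:
  assumes "pick_user f Ob W p yW b (fst ` set sel) W' = w" "pick_user f Ob W p yW b' (fst ` set sel) W' = w"
    "(\<Sum>s\<in>fst ` set sel. b s) = (\<Sum>s\<in>fst ` set sel. b' s)" "b w = b' w"
  shows "step f Ob W p yW b B \<alpha> (sel, W', st) = step f Ob W p yW b' B \<alpha> (sel, W', st)"
  using assms unfolding step_def by (simp add: Let_def)

lemma funpow_prefix:
  fixes g :: "'a list \<times> 'b \<Rightarrow> 'a list \<times> 'b"
  assumes "\<And>s. \<exists>zs. fst (g s) = fst s @ zs" "m \<le> n"
  shows "\<exists>zs. fst ((g ^^ n) x) = fst ((g ^^ m) x) @ zs"
  using assms(2)
proof (induction n rule: dec_induct)
  case base then show ?case by simp
next
  case (step n)
  then obtain zs where "fst ((g ^^ n) x) = fst ((g ^^ m) x) @ zs" by blast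
  moreover obtain ys where "fst (g ((g ^^ n) x)) = fst ((g ^^ n) x) @ ys" using assms(1) by blast
  ultimately show ?case by auto
qed

lemma funpow_W':
  fixes g :: "'a \<times> 'b set \<times> 'c \<Rightarrow> 'a \<times> 'b set \<times> 'c"
  assumes "\<And>s. fst (snd (g s)) \<subseteq> fst (snd s)" "m \<le> n"
  shows "fst (snd ((g ^^ n) x)) \<subseteq> fst (snd ((g ^^ m) x))"
  using assms(2)
proof (induction n rule: dec_induct)
  case base then show ?case by simp
next
  case (step n)
  then show ?case using assms(1)[of "(g ^^ n) x"] by auto
qed

lemma funpow_fix:
  assumes "g ((g ^^ m) x) = (g ^^ m) x" "m \<le> n"
  shows "(g ^^ n) x = (g ^^ m) x"
  using assms(2)
proof (induction n rule: dec_induct)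
  case base then show ?case by simp
next
  case (step n)
  then show ?case using assms(1) by simp
qed

lemma exists_transition:
  assumes "\<not> P (0::nat)" "P N" shows "\<exists>k<N. \<not> P k \<and> P (Suc k)"
  using assms
proof (induction N)
  case 0 then show ?case by simp
next
  case (Suc N)
  then show ?case by (cases "P N") (auto intro: less_SucI)
qed

context SG begin

definition inv :: "'w st \<Rightarrow> bool" where
  "inv s \<longleftrightarrow> fst (snd s) \<subseteq> W \<and> fst ` set (fst s) \<subseteq> W \<and> (\<forall>x\<in>set (fst s). 0 \<le> snd x)"

lemma pick_in:
  assumes "W' \<subseteq> W" "W' \<noteq> {}"
  shows "pick_user f Ob W p yW b S W' \<in> W'"
  unfolding pick_pk using pk_props(1)[OF finite_subset[OF assms(1) finW] assms(2)] .

lemma step_inv: assumes "inv s" shows "inv (step f Ob W p yW b B \<alpha> s)"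
proof -
  obtain sel W' st where s: "s = (sel, W', st)" by (cases s)
  have W'W: "W' \<subseteq> W" and SW: "fst ` set sel \<subseteq> W" and nn: "\<forall>x\<in>set sel. 0 \<le> snd x"
    using assms unfolding s inv_def by auto
  have pk: "W' \<noteq> {} \<Longrightarrow> pick_user f Ob W p yW b (fst ` set sel) W' \<in> W" using pick_in[OF W'W] W'W by blast
  have g: "0 \<le> exp_gain f Ob W p yW (fst ` set sel) u" for u using gain_nonneg[OF SW] .
  show ?thesis unfolding s step_def inv_def using W'W SW nn pk g by (auto simp: Let_def)
qed

lemma run_inv: "inv ((step f Ob W p yW b B \<alpha> ^^ n) ([], W, False))"
proof (induction n)
  case 0 then show ?case by (simp add: inv_def)
next
  case (Suc n) then show ?case using step_inv by simp
qed

lemma sum_list_nonneg_snd: "\<forall>x\<in>set (zs :: ('a \<times> real) list). 0 \<le> snd x \<Longrightarrow> 0 \<le> sum_list (map snd zs)"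
  by (induction zs) auto

lemma main:
  fixes b b' :: "'w \<Rightarrow> real" and B \<alpha> :: real and i :: 'w
  assumes Bpos: "B > 0" and al: "\<alpha> \<ge> 1" and bnn: "\<forall>w\<in>W. b w \<ge> 0"
    and iW: "i \<in> W" and b'i: "0 \<le> b' i" "b' i \<le> b i"
    and bb': "\<forall>w\<in>W. w \<noteq> i \<longrightarrow> b' w = b w"
    and sel: "i \<in> selected f Ob W p yW b B \<alpha>"
  shows "i \<in> selected f Ob W p yW b' B \<alpha>"
proof -
  define g where "g = step f Ob W p yW b B \<alpha>"
  define g' where "g' = step f Ob W p yW b' B \<alpha>"
  define x0 :: "'w st" where "x0 = ([], W, False)"
  define old where "old n = (g ^^ n) x0" for n
  define new where "new n = (g' ^^ n) x0" for n
  define SS where "SS s = fst ` set (fst s)" for s :: "'w st"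
  have gpre: "\<And>s. \<exists>zs. fst (g s) = fst s @ zs" unfolding g_def by (rule step_prefix)
  have g'pre: "\<And>s. \<exists>zs. fst (g' s) = fst s @ zs" unfolding g'_def by (rule step_prefix)
  have gW: "\<And>s. fst (snd (g s)) \<subseteq> fst (snd s)" unfolding g_def by (rule step_W')
  have "\<exists>k<card W. \<not> i \<in> SS (old k) \<and> i \<in> SS (old (Suc k))"
    by (rule exists_transition) (use sel in \<open>auto simp: SS_def old_def x0_def selected_def g_def\<close>)
  then obtain k where kW: "k < card W" and nk: "i \<notin> SS (old k)" and sk: "i \<in> SS (old (Suc k))" by blast
  obtain selk Wk stk where ok: "old k = (selk, Wk, stk)" by (cases "old k")
  have oSk: "old (Suc k) = g (old k)" unfolding old_def by simp
  have K: "\<not> stk \<and> Wk \<noteq> {} \<and> pick_user f Ob W p yW b (fst ` set selk) Wk = i \<and>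
     (\<Sum>s\<in>fst ` set selk. b s) + b i \<le> B \<and>
     b i \<le> B / \<alpha> * (exp_gain f Ob W p yW (fst ` set selk) i /
        (sum_list (map snd selk) + exp_gain f Ob W p yW (fst ` set selk) i))"
    by (rule step_sel_i) (use nk sk in \<open>auto simp: SS_def ok oSk g_def\<close>)
  have invk: "inv (old k)" unfolding old_def g_def x0_def by (rule run_inv)
  have WkW: "Wk \<subseteq> W" and SkW: "fst ` set selk \<subseteq> W" and nnk: "\<forall>x\<in>set selk. 0 \<le> snd x"
    using invk unfolding ok inv_def by auto
  have iWk: "i \<in> Wk" using K pick_in[OF WkW] by metis
  let ?dk = "exp_gain f Ob W p yW (fst ` set selk) i"
  let ?Dk = "sum_list (map snd selk)"
  have dk0: "0 \<le> ?dk" using gain_nonneg[OF SkW] .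
  have claim: "m \<le> Suc k \<Longrightarrow> (m \<le> k \<and> new m = old m) \<or> i \<in> SS (new m)" for m
  proof (induction m)
    case 0 then show ?case by (simp add: new_def old_def)
  next
    case (Suc m)
    then have mk: "m \<le> k" by simp
    have nSm: "new (Suc m) = g' (new m)" unfolding new_def by simp
    have oSm: "old (Suc m) = g (old m)" unfolding old_def by simp
    from Suc.IH mk consider "new m = old m" | "i \<in> SS (new m)" by auto
    then show ?case
    proof cases
      case 2
      obtain zs where "fst (new (Suc m)) = fst (new m) @ zs"
        using step_prefix unfolding nSm g'_def by blast
      then show ?thesis using 2 by (auto simp: SS_def)
    next
      case 1
      obtain selm Wm stm where om: "old m = (selm, Wm, stm)" by (cases "old m")
      have invm: "inv (old m)" unfolding old_def g_def x0_def by (rule run_inv)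
      have WmW: "Wm \<subseteq> W" and SmW: "fst ` set selm \<subseteq> W" and nnm: "\<forall>x\<in>set selm. 0 \<le> snd x"
        using invm unfolding om inv_def by auto
      obtain zs where pre: "selk = selm @ zs"
        using funpow_prefix[where g=g, OF gpre mk, of x0] ok om
        unfolding old_def by auto
      have SmSk: "fst ` set selm \<subseteq> fst ` set selk" using pre by auto
      have iSm: "i \<notin> fst ` set selm" using SmSk nk ok SS_def by auto
      have "Wk \<subseteq> Wm" using funpow_W'[where g=g, OF gW mk, of x0] ok om
        unfolding old_def by auto
      then have iWm: "i \<in> Wm" and neWm: "Wm \<noteq> {}" using iWk by auto
      have stm: "\<not> stm"
      proof
        assume stm
        then have "g (old m) = old m" unfolding om g_def by (simp add: step_stopped)
        then have "old (Suc k) = old m" "old k = old m" unfolding old_def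
          using funpow_fix mk by (metis le_SucI)+
        then show False using nk sk by simp
      qed
      let ?S = "fst ` set selm"
      let ?r = "\<lambda>u. ratio (exp_gain f Ob W p yW ?S u) (b u)"
      let ?r' = "\<lambda>u. ratio (exp_gain f Ob W p yW ?S u) (b' u)"
      have fWm: "finite Wm" using finite_subset[OF WmW finW] .
      have req: "\<forall>u\<in>Wm. u \<noteq> i \<longrightarrow> ?r' u = ?r u" using bb' WmW by auto
      have rle: "?r i \<le> ?r' i" by (rule ratio_mono[OF gain_nonneg[OF SmW] b'i])
      have sumeq: "(\<Sum>s\<in>?S. b s) = (\<Sum>s\<in>?S. b' s)"
      proof (rule sum.cong[OF refl])
        fix u assume "u \<in> ?S"
        then have "u \<in> W" "u \<noteq> i" using SmW iSm by auto
        then show "b u = b' u" using bb' by simp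
      qed
      show ?thesis
      proof (cases "pick_user f Ob W p yW b' ?S Wm = i")
        case True
        have fSk: "finite (fst ` set selk)" by simp
        have "(\<Sum>s\<in>?S. b' s) \<le> (\<Sum>s\<in>fst ` set selk. b s)"
          unfolding sumeq[symmetric] using SmSk SkW bnn by (intro sum_mono2[OF fSk]) auto
        then have bud: "(\<Sum>s\<in>?S. b' s) + b' i \<le> B" using K b'i by linarith
        have dm: "?dk \<le> exp_gain f Ob W p yW ?S i"
          using gain_anti[OF SmSk SkW iW] nk ok SS_def by auto
        have Dm0: "0 \<le> sum_list (map snd selm)" using sum_list_nonneg_snd nnm by blast
        have "0 \<le> sum_list (map snd zs)" using sum_list_nonneg_snd nnk pre by auto
        then have DmDk: "sum_list (map snd selm) \<le> ?Dk" using pre by simp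
        have cpos: "0 < B / \<alpha>" using Bpos al by simp
        have cond: "b' i \<le> B / \<alpha> * (exp_gain f Ob W p yW ?S i /
            (sum_list (map snd selm) + exp_gain f Ob W p yW ?S i))"
          by (rule arith_key[OF cpos dk0 dm Dm0 DmDk b'i]) (use K in simp)
        have "i \<in> fst ` set (fst (g' (selm, Wm, stm)))"
          unfolding g'_def by (rule step_sel_new[OF stm neWm True bud cond])
        then show ?thesis using nSm 1 om SS_def by simp
      next
        case False
        have pe: "pick_user f Ob W p yW b' ?S Wm = pick_user f Ob W p yW b ?S Wm"
          unfolding pick_pk by (rule pk_cmp1[OF fWm neWm req rle]) (use False in \<open>simp add: pick_pk\<close>)
        have mlt: "m \<noteq> k"
        proof
          assume "m = k"
          then have "pick_user f Ob W p yW b ?S Wm = i" using K ok om by simp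
          then show False using pe False by simp
        qed
        have pW: "pick_user f Ob W p yW b ?S Wm \<in> W" using pick_in[OF WmW neWm] WmW by blast
        have "g (selm, Wm, stm) = g' (selm, Wm, stm)"
          unfolding g_def g'_def
          by (rule step_same[OF refl pe sumeq]) (use bb' pW False pe in auto)
        then have "new (Suc m) = old (Suc m)" using nSm oSm 1 om by simp
        then show ?thesis using mk mlt by simp
      qed
    qed
  qed
  have "i \<in> SS (new (Suc k))" using claim[of "Suc k"] by simp
  moreover obtain zs where "fst (new (card W)) = fst (new (Suc k)) @ zs"
    using funpow_prefix[where g=g', OF g'pre, of "Suc k" "card W" x0] kW
    unfolding new_def by auto
  ultimately show ?thesis unfolding selected_def SS_def new_def g'_def x0_def by auto
qed

end


theorem lemma1:
  fixes V :: "'v set" and f :: "'v set \<Rightarrow> real" and Ob :: "'v set set"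
    and W :: "'w::linorder set" and p :: "'w \<Rightarrow> 'v set pmf" and yW :: "'w \<Rightarrow> 'v set"
    and b b' :: "'w \<Rightarrow> real" and B \<alpha> :: real and i :: 'w
  assumes "finite V"
    and "monotone_on_sets V f" and "submodular_on_sets V f" and "\<forall>A\<subseteq>V. f A \<ge> 0"
    and "finite W" and "Ob \<subseteq> Pow V"
    and "\<forall>w\<in>W. set_pmf (p w) \<subseteq> Ob"
    and "\<forall>w\<in>W. yW w \<in> Ob"
    and "B > 0" and "\<alpha> \<ge> 1"
    and "\<forall>w\<in>W. b w \<ge> 0"
    and "i \<in> W" and "0 \<le> b' i" and "b' i \<le> b i"
    and "\<forall>w\<in>W. w \<noteq> i \<longrightarrow> b' w = b w"
    and "i \<in> selected f Ob W p yW b B \<alpha>"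
  shows "i \<in> selected f Ob W p yW b' B \<alpha>"
proof -
  interpret SG V f Ob W p yW
    using assms by unfold_locales auto
  show ?thesis using main assms by blast
qed

end
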